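(* Let $(X,d)$ be a separable metric space, $T\colon X\to X$ a Borel measurable map and $\mu$ a $T$-invariant Borel probability measure such that $(X,T,\mu)$ is weakly mixing. Let $(s_n)_{n\ge1}$ be a two-jumpy scale sequence. Then the proximality gauge $\psi(x,y)=\liminf_{n\to\infty} s_n\, d(T^nx,T^ny)$ satisfies either $\psi=0$ for $\mu\times\mu$-a.e. $(x,y)$, or $\psi=\infty$ for $\mu\times\mu$-a.e. $(x,y)$.
   Context: A scale sequence is a sequence $(s_n)_{n\ge1}$ of positive reals with $s_n\to\infty$; it is two-jumpy if $s_{n+1}\ge s_n$ for all large $n$ and $\liminf_n s_{2n}/s_n>1$. Weakly mixing means $T\times T$ is ergodic with respect to $\mu\times\mu$. *)

theory Defs
  imports "HOL-Probability.Probability"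
begin

definition ergodic :: "'a measure \<Rightarrow> ('a \<Rightarrow> 'a) \<Rightarrow> bool" where
  "ergodic N f \<longleftrightarrow>
     (\<forall>A\<in>sets N. f -` A \<inter> space N = A \<longrightarrow> measure N A = 0 \<or> measure N A = 1)"

definition weakly_mixing :: "'a measure \<Rightarrow> ('a \<Rightarrow> 'a) \<Rightarrow> bool" where
  "weakly_mixing M T \<longleftrightarrow> ergodic (M \<Otimes>\<^sub>M M) (\<lambda>(x, y). (T x, T y))"

text \<open>Scale sequence, indexed from n = 1 (the value at 0 is irrelevant).\<close>
definition scale_sequence :: "(nat \<Rightarrow> real) \<Rightarrow> bool" where
  "scale_sequence s \<longleftrightarrow> (\<forall>n\<ge>1. s n > 0) \<and> filterlim s at_top sequentially"

definition two_jumpy :: "(nat \<Rightarrow> real) \<Rightarrow> bool" where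
  "two_jumpy s \<longleftrightarrow> scale_sequence s \<and>
     (\<forall>\<^sub>F n in sequentially. s (Suc n) \<ge> s n) \<and>
     liminf (\<lambda>n. ereal (s (2 * n) / s n)) > 1"

definition prox_gauge :: "(nat \<Rightarrow> real) \<Rightarrow> ('a::metric_space \<Rightarrow> 'a) \<Rightarrow> 'a \<Rightarrow> 'a \<Rightarrow> ereal" where
  "prox_gauge s T x y = liminf (\<lambda>n. ereal (s n * dist ((T ^^ n) x) ((T ^^ n) y)))"

end

theory Submission
  imports Defs
begin


lemma sum_shift_ivl: "(\<Sum>t<(n::nat). b (i0+t)) = (\<Sum>t\<in>{i0..<i0+n}. (b t :: real))"
  by (induction n) (auto simp: add.commute)

lemma comb:
  fixes b :: "nat \<Rightarrow> real" and P :: "nat \<Rightarrow> bool"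
  assumes b0: "\<And>t. 0 \<le> b t" and bp: "\<beta> > 0"
    and P: "\<And>i. P i \<Longrightarrow> \<exists>n. 1 \<le> n \<and> n \<le> N \<and> \<beta> * real n \<le> (\<Sum>t<n. b (i+t))"
  shows "\<beta> * (\<Sum>i\<in>{i0..<i0+L}. if P i then 1 else 0) \<le> (\<Sum>t\<in>{i0..<i0+L+N}. b t)"
proof (induction L arbitrary: i0 rule: less_induct)
  case (less L)
  have cnt: "(\<Sum>i\<in>{a..<a+m}. if P i then 1 else 0) \<le> real m" for a m
  proof -
    have "(\<Sum>i\<in>{a..<a+m}. if P i then 1 else 0) \<le> (\<Sum>i\<in>{a..<a+m}. (1::real))"
      by (intro sum_mono) auto
    then show ?thesis by simp
  qed
  have mono: "(\<Sum>t\<in>{a..<c}. b t) \<le> (\<Sum>t\<in>{a'..<c'}. b t)" if "a' \<le> a" "c \<le> c'" for a c a' c'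
    by (rule sum_mono2) (use that b0 in auto)
  show ?case
  proof (cases "L = 0")
    case True
    then show ?thesis by (simp add: sum_nonneg b0)
  next
    case L: False
    have split1: "{i0..<i0+L} = insert i0 {i0+1..<(i0+1)+(L-1)}" using L by auto
    show ?thesis
    proof (cases "P i0")
      case False
      have "(\<Sum>i\<in>{i0..<i0+L}. if P i then 1 else 0) = (\<Sum>i\<in>{i0+1..<(i0+1)+(L-1)}. if P i then (1::real) else 0)"
        unfolding split1 using False by (subst sum.insert) auto
      then have "\<beta> * (\<Sum>i\<in>{i0..<i0+L}. if P i then 1 else 0) \<le> (\<Sum>t\<in>{i0+1..<(i0+1)+(L-1)+N}. b t)"
        using less.IH[of "L-1" "i0+1"] L by simp
      also have "\<dots> \<le> (\<Sum>t\<in>{i0..<i0+L+N}. b t)" by (rule mono) (use L in auto)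
      finally show ?thesis .
    next
      case True
      then obtain n where n: "1 \<le> n" "n \<le> N" "\<beta> * real n \<le> (\<Sum>t<n. b (i0+t))" using P by blast
      have bn: "\<beta> * real n \<le> (\<Sum>t\<in>{i0..<i0+n}. b t)" using n(3) sum_shift_ivl by metis
      show ?thesis
      proof (cases "L \<le> n")
        case True
        have "\<beta> * (\<Sum>i\<in>{i0..<i0+L}. if P i then 1 else 0) \<le> \<beta> * real n"
          using cnt[of i0 L] True bp by (intro mult_left_mono) auto
        also have "\<dots> \<le> (\<Sum>t\<in>{i0..<i0+n}. b t)" by (rule bn)
        also have "\<dots> \<le> (\<Sum>t\<in>{i0..<i0+L+N}. b t)" by (rule mono) (use n in auto)
        finally show ?thesis .
      next
        case False
        have s1: "(\<Sum>i\<in>{i0..<i0+L}. if P i then 1 else 0) = (\<Sum>i\<in>{i0..<i0+n}. if P i then 1 else 0) + (\<Sum>i\<in>{i0+n..<(i0+n)+(L-n)}. if P i then (1::real) else 0)"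
          using False by (subst sum.atLeastLessThan_concat[symmetric, of _ "i0+n"]) auto
        have s2: "(\<Sum>t\<in>{i0..<i0+L+N}. b t) = (\<Sum>t\<in>{i0..<i0+n}. b t) + (\<Sum>t\<in>{i0+n..<(i0+n)+(L-n)+N}. b t)"
          using False by (subst sum.atLeastLessThan_concat[symmetric, of _ "i0+n"]) auto
        have "\<beta> * (\<Sum>i\<in>{i0..<i0+n}. if P i then 1 else 0) \<le> \<beta> * real n"
          using cnt[of i0 n] bp by (intro mult_left_mono) auto
        moreover have "\<beta> * (\<Sum>i\<in>{i0+n..<(i0+n)+(L-n)}. if P i then 1 else 0) \<le> (\<Sum>t\<in>{i0+n..<(i0+n)+(L-n)+N}. b t)"
          using less.IH[of "L-n" "i0+n"] n False by simp
        ultimately show ?thesis unfolding s1 s2 using bn by (simp add: distrib_left)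
      qed
    qed
  qed
qed


lemma maximal:
  fixes N :: "'b measure" and f :: "nat \<Rightarrow> 'b \<Rightarrow> 'b"
  assumes P: "prob_space N"
    and fm[measurable]: "\<And>n. f n \<in> N \<rightarrow>\<^sub>M N"
    and fd: "\<And>n. distr N N (f n) = N"
    and fc: "\<And>i t z. f t (f i z) = f (i+t) z"
    and B[measurable]: "B \<in> sets N" and bp: "\<beta> > 0" and K: "1 \<le> K"
  shows "measure N {z\<in>space N. \<exists>n\<in>{1..K}. \<beta> * real n \<le> (\<Sum>t<n. indicator B (f t z))} \<le> 2/\<beta> * measure N B"
proof -
  interpret prob_space N by fact
  define E where "E = {z\<in>space N. \<exists>n\<in>{1..K}. \<beta> * real n \<le> (\<Sum>t<n. indicator B (f t z))}"
  have Em[measurable]: "E \<in> sets N" unfolding E_def by measurable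
  have pw: "\<beta> * (\<Sum>i<K. indicator E (f i z)) \<le> (\<Sum>t<K+K. indicator B (f t z))" if z: "z \<in> space N" for z
  proof -
    have "\<beta> * (\<Sum>i\<in>{0..<0+K}. if f i z \<in> E then 1 else 0) \<le> (\<Sum>t\<in>{0..<0+K+K}. indicator B (f t z))"
    proof (rule comb)
      fix i assume "f i z \<in> E"
      then obtain n where "n \<in> {1..K}" "\<beta> * real n \<le> (\<Sum>t<n. indicator B (f t (f i z)))"
        unfolding E_def by auto
      then show "\<exists>n\<ge>1. n \<le> K \<and> \<beta> * real n \<le> (\<Sum>t<n. indicator B (f (i + t) z))"
        using fc by auto
    qed (use bp in auto)
    moreover have "(\<Sum>i<K. indicator E (f i z)) = (\<Sum>i<K. if f i z \<in> E then 1 else (0::real))"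
      by (rule sum.cong) (auto simp: indicator_def)
    ultimately show ?thesis by (simp add: atLeast0LessThan)
  qed
  have int: "integrable N (\<lambda>z. indicator A (f i z) :: real)" if "A \<in> sets N" for A i
    by (rule integrable_const_bound[where B=1]) (use that in auto)
  have intm: "integral\<^sup>L N (\<lambda>z. indicator A (f i z) :: real) = measure N A" if "A \<in> sets N" for A i
  proof -
    have "integral\<^sup>L N (\<lambda>z. indicator A (f i z) :: real) = integral\<^sup>L (distr N N (f i)) (indicator A)"
      by (rule integral_distr[symmetric]) (use that in auto)
    also have "\<dots> = measure N A" using fd that by simp
    finally show ?thesis .
  qed
  have "integral\<^sup>L N (\<lambda>z. \<beta> * (\<Sum>i<K. indicator E (f i z))) \<le> integral\<^sup>L N (\<lambda>z. (\<Sum>t<K+K. indicator B (f t z)))"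
    by (rule integral_mono_AE) (use pw int in auto)
  then have "\<beta> * (real K * measure N E) \<le> real (K+K) * measure N B"
    using int intm by (simp add: integral_sum)
  then have "real K * (\<beta> * measure N E) \<le> real K * (2 * measure N B)" by (simp add: algebra_simps)
  then have "\<beta> * measure N E \<le> 2 * measure N B" using K by (simp add: mult_le_cancel_left)
  then show ?thesis unfolding E_def[symmetric] using bp by (simp add: field_simps)
qed


lemma mono_chain:
  fixes s :: "nat \<Rightarrow> real"
  assumes "\<And>m. m \<ge> m0 \<Longrightarrow> s m \<le> s (Suc m)" "m0 \<le> i" "i \<le> j"
  shows "s i \<le> s j"
  using assms(3)
proof (induction j rule: dec_induct)
  case (step n) then show ?case using assms(1)[of n] assms(2) by linarith
qed simp

lemma core:
  fixes N :: "'b measure" and f :: "nat \<Rightarrow> 'b \<Rightarrow> 'b" and D :: "'b \<Rightarrow> real" and s :: "nat \<Rightarrow> real"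
  assumes P: "prob_space N"
    and fm[measurable]: "\<And>n. f n \<in> N \<rightarrow>\<^sub>M N"
    and fd: "\<And>n. distr N N (f n) = N"
    and fc: "\<And>i t z. f t (f i z) = f (i+t) z"
    and Dm[measurable]: "D \<in> borel_measurable N" and D0: "\<And>z. 0 \<le> D z"
    and smono: "\<And>m. m \<ge> m0 \<Longrightarrow> s m \<le> s (Suc m)"
    and dbl: "\<And>m. m \<ge> m0 \<Longrightarrow> c * s m \<le> s (2*m)"
    and lam: "c > 1" and ba: "b < c * a"
    and low: "AE z in N. ereal a \<le> liminf (\<lambda>n. ereal (s n * D (f n z)))"
    and up: "AE z in N. liminf (\<lambda>n. ereal (s n * D (f n z))) < ereal b"
  shows False
proof -
  interpret prob_space N by fact
  define a' where "a' = b / c"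
  have a'a: "a' < a" unfolding a'_def using lam ba by (simp add: field_simps)
  define G where "G K = {w\<in>space N. \<forall>k\<ge>K. a' < s k * D (f k w)}" for K
  define Bc where "Bc K = space N - G K" for K
  have Gm[measurable]: "G K \<in> sets N" for K unfolding G_def by measurable
  have Bcm[measurable]: "Bc K \<in> sets N" for K unfolding Bc_def by measurable
  have aeG: "AE w in N. \<exists>K. w \<in> G K"
    using low AE_space
  proof eventually_elim
    case (elim w)
    have "ereal a' < liminf (\<lambda>n. ereal (s n * D (f n w)))" 
      using less_le_trans[OF _ elim(1), of "ereal a'"] a'a by simp
    then have "eventually (\<lambda>n. ereal a' < ereal (s n * D (f n w))) sequentially"
      by (rule less_LiminfD)
    then obtain K where "\<forall>k\<ge>K. a' < s k * D (f k w)" by (auto simp: eventually_sequentially)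
    with elim(2) show ?case unfolding G_def by blast
  qed
  have decB: "decseq Bc"
    unfolding decseq_def Bc_def G_def by auto
  have "(\<Inter>K. Bc K) = {w\<in>space N. \<not> (\<exists>K. w \<in> G K)}" unfolding Bc_def by auto
  then have m0: "measure N (\<Inter>K. Bc K) = 0"
    using aeG prob_eq_0[of "\<Inter>K. Bc K"] by (auto simp: Bc_def)
  have "(\<lambda>K. measure N (Bc K)) \<longlonglongrightarrow> 0"
    using finite_Lim_measure_decseq[of Bc] decB m0 Bcm by (auto simp: image_subset_iff)
  then have "eventually (\<lambda>K. measure N (Bc K) < 1/20) sequentially"
    by (rule order_tendstoD) simp
  then obtain K where K: "K \<ge> m0 + 1" "measure N (Bc K) < 1/20"
    by (auto simp: eventually_sequentially) (metis le_add2 add.commute le_add1)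
  define \<beta> :: real where "\<beta> = 1/5"
  define E where "E L = {z\<in>space N. \<exists>n\<in>{1..Suc L}. \<beta> * real n \<le> (\<Sum>t<n. indicator (Bc K) (f t z))}" for L
  have Em[measurable]: "E L \<in> sets N" for L unfolding E_def by measurable
  have incE: "incseq E" unfolding incseq_def E_def by force
  have mE: "measure N (E L) \<le> 1/2" for L
  proof -
    have "measure N (E L) \<le> 2/\<beta> * measure N (Bc K)"
      unfolding E_def by (rule maximal[OF P fm fd fc]) (auto simp: \<beta>_def)
    then show ?thesis using K(2) by (simp add: \<beta>_def)
  qed
  have "(\<lambda>L. measure N (E L)) \<longlonglongrightarrow> measure N (\<Union>L. E L)"
    using finite_Lim_measure_incseq[of E] incE Em by (auto simp: image_subset_iff)
  then have mU: "measure N (\<Union>L. E L) \<le> 1/2"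
    by (rule LIMSEQ_le_const2) (use mE in auto)
  have aeE: "AE z in N. z \<in> (\<Union>L. E L)"
    using up AE_space
  proof eventually_elim
    case (elim z)
    have "\<exists>n\<ge>4*K. s n * D (f n z) < b"
    proof (rule ccontr)
      assume "\<not> ?thesis"
      then have "eventually (\<lambda>n. ereal b \<le> ereal (s n * D (f n z))) sequentially"
        by (auto simp: eventually_sequentially not_less)
      then have "ereal b \<le> liminf (\<lambda>n. ereal (s n * D (f n z)))" by (rule Liminf_bounded)
      then show False using elim(1) by simp
    qed
    then obtain n where n: "n \<ge> 4*K" "s n * D (f n z) < b" by blast
    define h where "h = n - n div 2"
    have inB: "f j z \<in> Bc K" if j: "h \<le> j" "j \<le> n - K" for j
    proof (rule ccontr)
      assume "f j z \<notin> Bc K"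
      moreover have "f j z \<in> space N" using elim(2) measurable_space[OF fm] by blast
      ultimately have "f j z \<in> G K" unfolding Bc_def by blast
      define k where "k = n - j"
      have kK: "k \<ge> K" "k \<le> n div 2" "j + k = n" using j n(1) unfolding k_def h_def by auto
      have "a' < s k * D (f k (f j z))" using \<open>f j z \<in> G K\<close> kK unfolding G_def by auto
      then have lt: "a' < s k * D (f n z)" using fc kK(3) by simp
      have "s k \<le> s (n div 2)" by (rule mono_chain[of m0 s, OF smono]) (use kK K in auto)
      moreover have "c * s (n div 2) \<le> s (2 * (n div 2))" by (rule dbl) (use n K in auto)
      moreover have "s (2 * (n div 2)) \<le> s n" by (rule mono_chain[of m0 s, OF smono]) (use n K in auto)
      ultimately have "c * s k \<le> s n" using lam mult_left_mono[of "s k" "s (n div 2)" c] by linarith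
      then have "c * (s k * D (f n z)) \<le> s n * D (f n z)"
        using D0[of "f n z"] by (simp add: mult.assoc[symmetric] mult_right_mono)
      also have "\<dots> < b" by (rule n(2))
      finally have "s k * D (f n z) < a'" unfolding a'_def using lam by (simp add: field_simps)
      with lt show False by simp
    qed
    have "(\<Sum>t\<in>{h..<n+1-K}. indicator (Bc K) (f t z)) \<le> (\<Sum>t<n+1. indicator (Bc K) (f t z) :: real)"
      by (rule sum_mono2) auto
    moreover have "(\<Sum>t\<in>{h..<n+1-K}. indicator (Bc K) (f t z)) = (\<Sum>t\<in>{h..<n+1-K}. (1::real))"
      by (rule sum.cong) (use inB in auto)
    moreover have "n + 1 \<le> 5 * (n+1-K-h)" 
    proof -
      have d: "n div 2 * 2 \<le> n" "n \<le> n div 2 * 2 + 1" by auto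
      then show ?thesis unfolding h_def using n(1) by arith
    qed
    then have "real (n+1) \<le> 5 * real (n+1-K-h)" by linarith
    ultimately have "\<beta> * real (n+1) \<le> (\<Sum>t<n+1. indicator (Bc K) (f t z))"
      unfolding \<beta>_def by simp
    then have "z \<in> E n" unfolding E_def using elim(2) by force
    then show ?case by blast
  qed
  have "measure N (\<Union>L. E L) = 1" using aeE prob_eq_1[of "\<Union>L. E L"] by auto
  with mU show False by simp
qed


lemma step_exists:
  assumes "\<not> P 0" "P (n::nat)" shows "\<exists>k. \<not> P k \<and> P (Suc k)"
  using assms by (induction n) auto

theorem corollary3p10:
  fixes M :: "'a::metric_space measure" and T :: "'a \<Rightarrow> 'a" and s :: "nat \<Rightarrow> real"
  assumes "separable_space (euclidean :: 'a topology)"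
    and "sets M = sets borel"
    and "prob_space M"
    and "T \<in> borel_measurable borel"
    and "distr M M T = M"
    and "weakly_mixing M T"
    and "two_jumpy s"
  shows "(AE z in M \<Otimes>\<^sub>M M. prox_gauge s T (fst z) (snd z) = 0) \<or>
         (AE z in M \<Otimes>\<^sub>M M. prox_gauge s T (fst z) (snd z) = \<infinity>)"
proof -
  interpret M: prob_space M by fact
  have spM: "space M = UNIV" using sets_eq_imp_space_eq[OF assms(2)] by simp
  have Tm[measurable]: "T \<in> M \<rightarrow>\<^sub>M M"
    using assms(4) measurable_cong_sets[OF assms(2) assms(2)] by simp
  define N where "N = M \<Otimes>\<^sub>M M"
  have PN: "prob_space N" unfolding N_def by (rule prob_space_pair) (use assms(3) in auto)
  interpret N: prob_space N by (rule PN)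
  have spN: "space N = UNIV" unfolding N_def by (simp add: space_pair_measure spM)
  define f where "f n z = ((T^^n) (fst z), (T^^n) (snd z))" for n z
  have Tn[measurable]: "(T^^n) \<in> M \<rightarrow>\<^sub>M M" for n by (rule measurable_compose_n[OF Tm])
  have fm[measurable]: "f n \<in> N \<rightarrow>\<^sub>M N" for n unfolding f_def N_def
    by (intro measurable_Pair measurable_compose[OF measurable_fst Tn] measurable_compose[OF measurable_snd Tn])
  have fdM: "distr M M (T^^n) = M" for n
  proof (induction n)
    case 0 then show ?case by (simp add: id_def)
  next
    case (Suc n)
    have "distr M M (T^^Suc n) = distr M M ((T^^n) \<circ> T)" by (simp only: funpow_Suc_right)
    also have "\<dots> = distr (distr M M T) M (T^^n)" by (rule distr_distr[symmetric]) auto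
    also have "\<dots> = M" using Suc assms(5) by simp
    finally show ?case .
  qed
  have fd: "distr N N (f n) = N" for n
  proof -
    have "distr M M (T^^n) \<Otimes>\<^sub>M distr M M (T^^n) = distr (M \<Otimes>\<^sub>M M) (M \<Otimes>\<^sub>M M) (\<lambda>(x, y). ((T^^n) x, (T^^n) y))"
      by (rule pair_measure_distr) (auto simp: fdM M.sigma_finite_measure_axioms)
    moreover have "(\<lambda>(x, y). ((T^^n) x, (T^^n) y)) = f n" unfolding f_def by auto
    ultimately show ?thesis unfolding N_def fdM by simp
  qed
  have fc: "f t (f i z) = f (i+t) z" for i t z
    by (simp add: f_def add.commute[of i t] funpow_add)
  define D where "D z = dist (fst z) (snd z)" for z :: "'a \<times> 'a"
  have D0: "0 \<le> D z" for z unfolding D_def by simp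
  obtain C where C: "countable C" "closure C = (UNIV :: 'a set)"
    using assms(1) unfolding separable_space_def by auto
  have dc1[measurable]: "(\<lambda>x. dist x c) \<in> borel_measurable M" for c :: 'a
  proof -
    have "(\<lambda>x. dist x c) \<in> borel_measurable borel" by (intro borel_measurable_continuous_onI continuous_intros)
    then show ?thesis by (rule measurable_cong_sets[OF assms(2) refl, THEN equalityD2, THEN subsetD])
  qed
  have dc2[measurable]: "(\<lambda>x. dist c x) \<in> borel_measurable M" for c :: 'a
  proof -
    have "(\<lambda>x. dist c x) \<in> borel_measurable borel" by (intro borel_measurable_continuous_onI continuous_intros)
    then show ?thesis by (rule measurable_cong_sets[OF assms(2) refl, THEN equalityD2, THEN subsetD])
  qed
  have Dm[measurable]: "D \<in> borel_measurable N"
  proof (rule borel_measurableI_less)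
    fix y
    have "{z\<in>space N. D z < y} = (\<Union>c\<in>C. {z\<in>space N. dist (fst z) c + dist c (snd z) < y})"
    proof safe
      fix z assume z: "z \<in> space N" "D z < y"
      have "fst z \<in> closure C" using C by simp
      then obtain c where c: "c \<in> C" "dist c (fst z) < (y - D z)/2"
        using z closure_approachable[of "fst z" C] by (metis half_gt_zero diff_gt_0_iff_gt)
      have "dist c (snd z) \<le> dist c (fst z) + D z" unfolding D_def by (rule dist_triangle)
      then have "dist (fst z) c + dist c (snd z) < y" using c by (simp add: dist_commute)
      then show "z \<in> (\<Union>c\<in>C. {z\<in>space N. dist (fst z) c + dist c (snd z) < y})" using c z by auto
    next
      fix z c assume "z \<in> space N" "c \<in> C" "dist (fst z) c + dist c (snd z) < y"
      moreover have "D z \<le> dist (fst z) c + dist c (snd z)" unfolding D_def by (rule dist_triangle)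
      ultimately show "D z < y" by simp
    qed
    moreover have "(\<Union>c\<in>C. {z\<in>space N. dist (fst z) c + dist c (snd z) < y}) \<in> sets N"
      by (rule sets.countable_UN''[OF C(1)]) (unfold N_def, measurable)
    ultimately show "{z\<in>space N. D z < y} \<in> sets N" by simp
  qed
  define L where "L z = liminf (\<lambda>n. ereal (s n * D (f n z)))" for z
  have psi_eq: "prox_gauge s T (fst z) (snd z) = L z" for z
    by (simp add: prox_gauge_def L_def D_def f_def)
  have Lm[measurable]: "L \<in> borel_measurable N" unfolding L_def by measurable
  have spos: "\<And>n. n \<ge> 1 \<Longrightarrow> s n > 0" and evm: "eventually (\<lambda>n. s (Suc n) \<ge> s n) sequentially"
    and lim1: "liminf (\<lambda>n. ereal (s (2 * n) / s n)) > 1"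
    using assms(7) unfolding two_jumpy_def scale_sequence_def by auto
  obtain c where c: "1 < ereal c" "ereal c < liminf (\<lambda>n. ereal (s (2 * n) / s n))"
    using ereal_dense2[OF lim1] by blast
  have c1: "c > 1" using c(1) by simp
  have "eventually (\<lambda>n. ereal c < ereal (s (2 * n) / s n)) sequentially"
    by (rule less_LiminfD[OF c(2)])
  then have "eventually (\<lambda>n. c < s (2 * n) / s n \<and> s (Suc n) \<ge> s n \<and> n \<ge> 1) sequentially"
    using evm eventually_ge_at_top[of 1] by eventually_elim auto
  then obtain m0 where m0: "\<And>n. n \<ge> m0 \<Longrightarrow> c < s (2 * n) / s n \<and> s (Suc n) \<ge> s n \<and> n \<ge> 1"
    by (auto simp: eventually_sequentially)
  have smono: "s m \<le> s (Suc m)" if "m \<ge> m0" for m using m0[OF that] by simp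
  have dbl: "c * s m \<le> s (2*m)" if "m \<ge> m0" for m
  proof -
    have "c < s (2 * m) / s m" "s m > 0" using m0[OF that] spos by auto
    then show ?thesis by (simp add: field_simps)
  qed
  have L0: "0 \<le> L z" for z
    unfolding L_def
  proof (rule Liminf_bounded)
    show "eventually (\<lambda>n. 0 \<le> ereal (s n * D (f n z))) sequentially"
      using eventually_ge_at_top[of 1]
    proof eventually_elim
      case (elim n) then show ?case using spos[of n] D0[of "f n z"] by simp
    qed
  qed
  have LS: "L (f 1 w) \<le> L w" for w
  proof -
    have "L (f 1 w) = liminf (\<lambda>n. ereal (s n * D (f (n+1) w)))" unfolding L_def by (simp add: fc)
    also have "\<dots> \<le> liminf (\<lambda>n. ereal (s (n+1) * D (f (n+1) w)))"
    proof (rule Liminf_mono)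
      show "eventually (\<lambda>n. ereal (s n * D (f (n+1) w)) \<le> ereal (s (n+1) * D (f (n+1) w))) sequentially"
        using eventually_ge_at_top[of m0]
      proof eventually_elim
        case (elim n) then show ?case
          using mult_right_mono[OF smono[of n] D0[of "f (n+1) w"]] by simp
      qed
    qed
    also have "\<dots> = L w" unfolding L_def by (rule liminf_shift[where u="\<lambda>n. ereal (s n * D (f n w))"])
    finally show ?thesis .
  qed
  have LSn: "L (f k w) \<le> L w" for k w
  proof (induction k)
    case 0 then show ?case by (simp add: f_def)
  next
    case (Suc k)
    have "L (f (Suc k) w) = L (f 1 (f k w))" by (simp add: fc)
    also have "\<dots> \<le> L (f k w)" by (rule LS)
    finally show ?case using Suc by simp
  qed
  define Q where "Q q = {z\<in>space N. L z < ereal q}" for q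
  have Qm[measurable]: "Q q \<in> sets N" for q unfolding Q_def by measurable
  have F01: "measure N (Q q) = 0 \<or> measure N (Q q) = 1" for q
  proof -
    define I where "I = {z\<in>space N. \<exists>n. L (f n z) < ereal q}"
    have Im: "I \<in> sets N" unfolding I_def by measurable
    have S1: "(\<lambda>(x, y). (T x, T y)) = f 1" unfolding f_def by auto
    have inv: "(\<lambda>(x, y). (T x, T y)) -` I \<inter> space (M \<Otimes>\<^sub>M M) = I"
    proof -
      have "z \<in> I \<longleftrightarrow> f 1 z \<in> I" for z
      proof
        assume "z \<in> I"
        then obtain n where "L (f n z) < ereal q" unfolding I_def by auto
        moreover have "L (f n (f 1 z)) \<le> L (f n z)"
          using LS[of "f n z"] by (simp add: fc add.commute)
        ultimately have "L (f n (f 1 z)) < ereal q" by (metis le_less_trans)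
        then show "f 1 z \<in> I" unfolding I_def spN by blast
      next
        assume "f 1 z \<in> I"
        then obtain n where "L (f n (f 1 z)) < ereal q" unfolding I_def by auto
        then have "L (f (1+n) z) < ereal q" by (simp add: fc)
        then show "z \<in> I" unfolding I_def spN by blast
      qed
      then show ?thesis unfolding S1 N_def[symmetric] spN by auto
    qed
    have erg: "measure N I = 0 \<or> measure N I = 1"
      using assms(6) Im inv unfolding weakly_mixing_def ergodic_def N_def by blast
    have ae: "AE z in N. L (f n z) < ereal q \<longrightarrow> L z < ereal q" for n
    proof -
      define X where "X = (f n -` Q q \<inter> space N) - Q q"
      have Pm: "f n -` Q q \<inter> space N \<in> sets N" by measurable
      have sub: "Q q \<subseteq> f n -` Q q \<inter> space N"
        unfolding Q_def spN using LSn[of n] le_less_trans by fastforce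
      have "measure N (f n -` Q q \<inter> space N) = measure N (Q q)"
        using measure_distr[OF fm Qm, of n] fd by simp
      then have "measure N X = 0" unfolding X_def
        by (subst N.finite_measure_Diff[OF Pm Qm sub]) simp
      then have "AE z in N. z \<notin> X" using N.prob_eq_0[of X] Pm Qm unfolding X_def by auto
      then show ?thesis by eventually_elim (auto simp: X_def Q_def spN)
    qed
    have "AE z in N. z \<in> I \<longleftrightarrow> z \<in> Q q"
    proof -
      have "AE z in N. \<forall>n. L (f n z) < ereal q \<longrightarrow> L z < ereal q" by (rule AE_all_countable[THEN iffD2]) (use ae in blast)
      then show ?thesis
      proof eventually_elim
        case (elim z)
        have "f 0 z = z" by (simp add: f_def)
        show ?case
        proof
          assume "z \<in> I"
          then obtain n where "L (f n z) < ereal q" unfolding I_def by blast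
          then show "z \<in> Q q" using elim[rule_format, of n] unfolding Q_def spN by blast
        next
          assume "z \<in> Q q"
          then have "L (f 0 z) < ereal q" using \<open>f 0 z = z\<close> unfolding Q_def by simp
          then show "z \<in> I" unfolding I_def spN by blast
        qed
      qed
    qed
    then have "measure N I = measure N (Q q)" by (rule measure_eq_AE) (use Im in auto)
    with erg show ?thesis by simp
  qed
  have Fmono: "measure N (Q q) \<le> measure N (Q q')" if "q \<le> q'" for q q'
    by (rule N.finite_measure_mono) (use that in \<open>auto simp: Q_def intro: less_le_trans\<close>)
  have F0: "AE z in N. ereal q \<le> L z" if "measure N (Q q) = 0" for q
    using N.prob_eq_0[OF Qm[of q]] that by (auto simp: Q_def spN not_less)
  have F1: "AE z in N. L z < ereal q" if "measure N (Q q) = 1" for q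
    using N.prob_eq_1[OF Qm[of q]] that by (auto simp: Q_def spN)
  have main: "(AE z in N. L z = 0) \<or> (AE z in N. L z = \<infinity>)"
  proof (rule ccontr)
    assume nc: "\<not> ?thesis"
    have "\<exists>q>0. measure N (Q q) = 0"
    proof (rule ccontr)
      assume "\<not> ?thesis"
      then have "measure N (Q q) = 1" if "q > 0" for q using F01[of q] that by auto
      then have "AE z in N. L z < ereal (1 / Suc k)" for k :: nat using F1 by simp
      then have "AE z in N. \<forall>k::nat. L z < ereal (1 / Suc k)" unfolding AE_all_countable by blast
      then have "AE z in N. L z = 0"
      proof eventually_elim
        case (elim z)
        show ?case
        proof (rule ccontr)
          assume "L z \<noteq> 0"
          then have "0 < L z" using L0[of z] by simp
          then obtain r where r: "0 < ereal r" "ereal r < L z" using ereal_dense2 by blast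
          then have "r > 0" by simp
          then obtain k :: nat where "1 / Suc k < r" using nat_approx_posE by blast
          then have "ereal (1 / Suc k) < L z" using r(2) less_trans[of "ereal (1 / Suc k)" "ereal r" "L z"] by simp
          then show False using elim[rule_format, of k] by simp
        qed
      qed
      then show False using nc by simp
    qed
    then obtain q where q: "q > 0" "measure N (Q q) = 0" by blast
    have "\<exists>q'. measure N (Q q') = 1"
    proof (rule ccontr)
      assume "\<not> ?thesis"
      then have "measure N (Q q') = 0" for q' using F01[of q'] by auto
      then have "AE z in N. ereal (real k) \<le> L z" for k :: nat using F0 by simp
      then have "AE z in N. \<forall>k::nat. ereal (real k) \<le> L z" unfolding AE_all_countable by blast
      then have "AE z in N. L z = \<infinity>"
      proof eventually_elim
        case (elim z)
        show ?case
        proof (rule ereal_top)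
          fix B :: real
          obtain k :: nat where "B \<le> real k" using real_arch_simple by blast
          then show "ereal B \<le> L z" using elim[rule_format, of k] order_trans[of "ereal B" "ereal (real k)" "L z"] by simp
        qed
      qed
      then show False using nc by simp
    qed
    then obtain q' where q': "measure N (Q q') = 1" by blast
    define r where "r = (1 + c) / 2"
    have r: "1 < r" "r < c" unfolding r_def using c1 by auto
    obtain n where n: "q' / q < r ^ n" using real_arch_pow[OF r(1)] by blast
    have "q' \<le> q * r ^ n" using n q(1) by (simp add: field_simps)
    then have "measure N (Q (q * r ^ n)) \<ge> 1" using Fmono q' by fastforce
    moreover have "measure N (Q (q * r ^ n)) \<le> 1" by (rule N.prob_le_1)
    ultimately have Pn: "measure N (Q (q * r ^ n)) = 1" by simp
    obtain k where k: "measure N (Q (q * r ^ k)) \<noteq> 1" "measure N (Q (q * r ^ Suc k)) = 1"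
      using step_exists[of "\<lambda>k. measure N (Q (q * r ^ k)) = 1" n] Pn q by auto
    define a where "a = q * r ^ k"
    have apos: "a > 0" unfolding a_def using q r by simp
    have low: "AE z in N. ereal a \<le> L z" using F0 F01[of a] k(1) unfolding a_def by auto
    have up: "AE z in N. L z < ereal (r * a)" using F1 k(2) unfolding a_def by (simp add: mult.commute mult.left_commute)
    have ba: "r * a < c * a" using r apos by simp
    show False
      by (rule core[OF PN fm fd fc Dm D0 smono dbl c1 ba low[unfolded L_def] up[unfolded L_def]])
  qed
  then show ?thesis unfolding psi_eq N_def[symmetric] .
qed
end
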